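(* Let $P\subseteq\mathrm{Act}^\omega$ and let $L_a,L_r\subseteq\mathrm{Act}^*$ be sets of finite traces (the traces accepted, resp. rejected, by some monitor) such that: (1) verdicts are irrevocable: $L_a$ and $L_r$ are closed under finite extensions ($s\in L_a$ implies $ss'\in L_a$ for all $s'\in\mathrm{Act}^*$, and likewise for $L_r$); (2) soundness: for every $t\in\mathrm{Act}^\omega$, if some finite prefix of $t$ is in $L_r$ then $t\notin P$, and if some finite prefix of $t$ is in $L_a$ then $t\in P$; (3) completeness: every $t\in P$ has a finite prefix in $L_a$ and every $t\in\mathrm{Act}^\omega\setminus P$ has a finite prefix in $L_r$. Then there is a closed recursion-free formula $\varphi$ (built only from $\mathrm{tt},\mathrm{ff},\wedge,\vee,[A],\langle A\rangle$) with $[\![\varphi]\!]_L=P$.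
   Context: $\mathrm{Act}$ is a finite set of actions. Linear-time semantics over $\mathrm{Act}^\omega$ for recursion-free formulae $\varphi::=\mathrm{tt}\mid\mathrm{ff}\mid\varphi\vee\varphi\mid\varphi\wedge\varphi\mid\langle A\rangle\varphi\mid[A]\varphi$ ($A\subseteq\mathrm{Act}$): $[\![\mathrm{tt}]\!]_L=\mathrm{Act}^\omega$, $[\![\mathrm{ff}]\!]_L=\emptyset$, $\vee,\wedge$ union/intersection, $[\![\langle A\rangle\varphi]\!]_L=\{at\mid a\in A,t\in[\![\varphi]\!]_L\}$, $[\![[A]\varphi]\!]_L=\{t\mid\forall a\in A,\forall t'.\ t=at'\Rightarrow t'\in[\![\varphi]\!]_L\}$. *)

theory Defs
  imports Main "HOL-Library.Omega_Words_Fun"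
begin

text \<open>Recursion-free formulae over the action alphabet 'a (Act = UNIV :: 'a set, finite).\<close>
datatype 'a rfform =
    TT
  | FF
  | Or "'a rfform" "'a rfform"
  | And "'a rfform" "'a rfform"
  | Dia "'a set" "'a rfform"
  | Box "'a set" "'a rfform"

text \<open>Linear-time semantics over infinite traces (words nat => 'a).
  A trace t equals a t' iff t 0 = a and t' = suffix 1 t.\<close>
fun lsem :: "'a rfform \<Rightarrow> 'a word set" where
  "lsem TT = UNIV"
| "lsem FF = {}"
| "lsem (Or f g) = lsem f \<union> lsem g"
| "lsem (And f g) = lsem f \<inter> lsem g"
| "lsem (Dia A f) = {t. t 0 \<in> A \<and> suffix 1 t \<in> lsem f}"
| "lsem (Box A f) = {t. t 0 \<in> A \<longrightarrow> suffix 1 t \<in> lsem f}"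

end

theory Submission
  imports Defs
begin

lemma lsem_foldr_And:
  "lsem (foldr (\<lambda>a acc. And (g a) acc) xs TT) = (\<Inter>a\<in>set xs. lsem (g a))"
  by (induction xs) auto

lemma prefix_Suc_eq: "prefix (Suc n) t = prefix n t @ [t n]"
  by simp

lemma dep_formula:
  fixes Q :: "('a::finite) word set"
  shows "(\<forall>t t'. prefix N t = prefix N t' \<longrightarrow> (t \<in> Q \<longleftrightarrow> t' \<in> Q)) \<Longrightarrow> \<exists>\<phi>. lsem \<phi> = Q"
proof (induction N arbitrary: Q)
  case 0
  then have eqQ: "\<forall>t t'. t \<in> Q \<longleftrightarrow> t' \<in> Q" by simp
  have all: "t \<in> Q \<Longrightarrow> t' \<in> Q" for t t'
    using eqQ[rule_format, of t t'] by (rule iffD1)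
  have "Q = {} \<or> Q = UNIV"
  proof (cases "Q = {}")
    case False
    then obtain t0 where "t0 \<in> Q" by auto
    then have "t \<in> Q" for t using all by simp
    then show ?thesis by auto
  qed simp
  then show ?case
  proof
    assume "Q = {}" then have "lsem FF = Q" by simp
    then show ?case by (rule exI)
  next
    assume "Q = UNIV" then have "lsem TT = Q" by simp
    then show ?case by (rule exI)
  qed
next
  case (Suc N)
  have "\<forall>a. \<exists>\<phi>. lsem \<phi> = {t. a ## t \<in> Q}"
  proof
    fix a :: 'a
    show "\<exists>\<phi>. lsem \<phi> = {t. a ## t \<in> Q}"
    proof (rule Suc.IH, intro allI impI)
      fix t t' :: "'a word"
      assume h: "prefix N t = prefix N t'"
      have "prefix (Suc N) (a ## t) = prefix (Suc N) (a ## t')"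
      proof -
        have "prefix (Suc N) (a ## t) = a # prefix N t"
          by (rule nth_equalityI) (auto simp del: upt_Suc simp: subsequence_def nth_Cons split: nat.split)
        moreover have "prefix (Suc N) (a ## t') = a # prefix N t'"
          by (rule nth_equalityI) (auto simp del: upt_Suc simp: subsequence_def nth_Cons split: nat.split)
        ultimately show ?thesis using h by simp
      qed
      then show "t \<in> {t. a ## t \<in> Q} \<longleftrightarrow> t' \<in> {t. a ## t \<in> Q}"
        using Suc.prems[rule_format, of "a ## t" "a ## t'"] by simp
    qed
  qed
  then have "\<exists>g. \<forall>a. lsem (g a) = {t. a ## t \<in> Q}" by (rule choice)
  then obtain g where g0: "\<forall>a. lsem (g a) = {t. a ## t \<in> Q}" by (rule exE)
  note g = g0[rule_format]
  obtain xs :: "'a list" where xs: "set xs = UNIV" using finite_list[OF finite_UNIV] by (rule exE)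
  let ?\<phi> = "foldr (\<lambda>a acc. And (Box {a} (g a)) acc) xs TT"
  have "lsem ?\<phi> = Q"
  proof -
    have "lsem ?\<phi> = (\<Inter>a. lsem (Box {a} (g a)))"
      using lsem_foldr_And[of "\<lambda>a. Box {a} (g a)" xs] xs by simp
    also have "\<dots> = Q"
    proof (rule set_eqI)
      fix t :: "'a word"
      have "t \<in> (\<Inter>a. lsem (Box {a} (g a))) \<longleftrightarrow> (\<forall>a. t 0 = a \<longrightarrow> suffix 1 t \<in> lsem (g a))"
        by simp
      also have "\<dots> \<longleftrightarrow> suffix 1 t \<in> lsem (g (t 0))" by simp
      also have "\<dots> \<longleftrightarrow> (t 0 ## suffix 1 t \<in> Q)" using g[of "t 0"] by simp
      also have "\<dots> \<longleftrightarrow> t \<in> Q" by simp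
      finally show "t \<in> (\<Inter>a. lsem (Box {a} (g a))) \<longleftrightarrow> t \<in> Q" .
    qed
    finally show ?thesis .
  qed
  then show ?case by (rule exI)
qed



lemma bad_step:
  fixes L :: "('a::finite) list set"
  assumes ext: "\<forall>s\<in>L. \<forall>s'. s @ s' \<in> L"
    and bad: "\<forall>N. \<exists>v. length v = N \<and> w @ v \<notin> L"
  shows "\<exists>a. \<forall>N. \<exists>v. length v = N \<and> (w @ [a]) @ v \<notin> L"
proof (rule ccontr)
  assume "\<not> ?thesis"
  then have "\<forall>a. \<exists>N. \<forall>v. length v = N \<longrightarrow> (w @ [a]) @ v \<in> L" by blast
  then obtain Nf where Nf: "\<And>a v. length v = Nf a \<Longrightarrow> (w @ [a]) @ v \<in> L" by metis
  define M where "M = Max (range Nf)"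
  have leM: "Nf a \<le> M" for a unfolding M_def by simp
  obtain v where v: "length v = Suc M" "w @ v \<notin> L" using bad by blast
  then obtain a v' where av: "v = a # v'" by (cases v) auto
  have "(w @ [a]) @ take (Nf a) v' \<in> L" using Nf[of "take (Nf a) v'" a] v av leM[of a] by simp
  then have "((w @ [a]) @ take (Nf a) v') @ drop (Nf a) v' \<in> L" using ext by blast
  then have "w @ v \<in> L" using av by simp
  then show False using v by simp
qed

lemma koenig:
  fixes L :: "('a::finite) list set"
  assumes ext: "\<forall>s\<in>L. \<forall>s'. s @ s' \<in> L"
    and all: "\<forall>t. \<exists>n. prefix n t \<in> L"
  shows "\<exists>N. \<forall>v. length v = N \<longrightarrow> v \<in> L"
proof (rule ccontr)
  assume "\<not> ?thesis"
  then have b0: "\<forall>N. \<exists>v. length v = N \<and> [] @ v \<notin> L" by auto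
  define bad where "bad w \<longleftrightarrow> (\<forall>N. \<exists>v. length v = N \<and> w @ v \<notin> L)" for w
  define c where "c w = (SOME a. bad (w @ [a]))" for w
  have cstep: "bad w \<Longrightarrow> bad (w @ [c w])" for w
    unfolding c_def by (rule someI_ex) (use bad_step[OF ext] in \<open>auto simp: bad_def\<close>)
  define f where "f = rec_nat [] (\<lambda>n w. w @ [c w])"
  have f0: "f 0 = []" and fS: "f (Suc n) = f n @ [c (f n)]" for n unfolding f_def by simp_all
  have fbad: "bad (f n)" for n
    by (induction n) (use b0 cstep in \<open>auto simp: f0 fS bad_def\<close>)
  define t where "t n = c (f n)" for n
  have pf: "prefix n t = f n" for n
    by (induction n) (auto simp: f0 fS t_def subsequence_def)
  obtain n where "prefix n t \<in> L" using all by blast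
  then have "f n \<in> L" using pf by simp
  then have "f n @ [] \<in> L" by simp
  moreover obtain v where "length v = 0" "f n @ v \<notin> L" using fbad[of n] unfolding bad_def by blast
  ultimately show False by simp
qed

theorem mainTheorem18:
  fixes P :: "('a::finite) word set"
    and La Lr :: "'a list set"
  assumes ext_a: "\<forall>s\<in>La. \<forall>s'. s @ s' \<in> La"
    and ext_r: "\<forall>s\<in>Lr. \<forall>s'. s @ s' \<in> Lr"
    and sound_r: "\<forall>t. (\<exists>n. prefix n t \<in> Lr) \<longrightarrow> t \<notin> P"
    and sound_a: "\<forall>t. (\<exists>n. prefix n t \<in> La) \<longrightarrow> t \<in> P"
    and compl_a: "\<forall>t\<in>P. \<exists>n. prefix n t \<in> La"
    and compl_r: "\<forall>t. t \<notin> P \<longrightarrow> (\<exists>n. prefix n t \<in> Lr)"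
  shows "\<exists>\<phi>. lsem \<phi> = P"
proof -
  have ext: "\<forall>s\<in>La \<union> Lr. \<forall>s'. s @ s' \<in> La \<union> Lr" using ext_a ext_r by blast
  have all: "\<forall>t. \<exists>n. prefix n t \<in> La \<union> Lr" using compl_a compl_r by blast
  obtain N where N: "\<And>v. length v = N \<Longrightarrow> v \<in> La \<union> Lr" using koenig[OF ext all] by blast
  have key: "t \<in> P \<Longrightarrow> t' \<notin> P \<Longrightarrow> prefix N t \<noteq> prefix N t'" for t t'
  proof
    assume "t \<in> P" "t' \<notin> P" "prefix N t = prefix N t'"
    have "prefix N t \<in> La \<union> Lr" using N by (simp add: subsequence_def)
    then show False
    proof
      assume "prefix N t \<in> La" then have "prefix N t' \<in> La" using \<open>prefix N t = prefix N t'\<close> by simp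
      then have "t' \<in> P" using sound_a by blast
      then show False using \<open>t' \<notin> P\<close> by simp
    next
      assume "prefix N t \<in> Lr" then have "t \<notin> P" using sound_r by blast
      then show False using \<open>t \<in> P\<close> by simp
    qed
  qed
  show ?thesis
  proof (rule dep_formula[of N], intro allI impI)
    fix t t' :: "'a word" assume "prefix N t = prefix N t'"
    then show "t \<in> P \<longleftrightarrow> t' \<in> P" using key[of t t'] key[of t' t] by auto
  qed
qed

end
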